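(* There is no function $f:\Gamma^{\pm}(2)\to\mathbb C^\times$ such that $\overline C(h_1,h_2)=f(h_1)f(h_2)f(h_1h_2)^{-1}$ for all $h_1,h_2\in\Gamma^\pm(2)$; i.e. the restriction of the class of $\overline C$ to $\Gamma^\pm(2)$ is non-trivial.
   Context: $\Gamma^\pm(2)=\{g\in GL_2(\mathbb Z):g\equiv I\pmod 2\}$. Hilbert symbol $(x,y)_{\mathbb R}=-1$ if $x<0,y<0$, else $1$. For $g=\begin{pmatrix}a&b\\c&d\end{pmatrix}\in SL_2(\mathbb R)$: $x(g)=d$ if $c=0$, $x(g)=c$ otherwise; $\bar c(g_1,g_2)=(x(g_1),x(g_2))_{\mathbb R}(-x(g_1)x(g_2),x(g_1g_2))_{\mathbb R}$; $\nu_2(y,g)=(y,a)_{\mathbb R}$ if $c=0$ and $\nu_2(y,g)=1$ if $c\ne0$. Let $s(y)=\operatorname{diag}(1,y)$. For $h_1,h_2\in GL_2(\mathbb R)$ put $y_i=\det h_i$, $g_i=s(y_i)^{-1}h_i\in SL_2(\mathbb R)$, and $\overline C(h_1,h_2)=\nu_2(y_2,g_1)\,\bar c(s(y_2)^{-1}g_1s(y_2),g_2)$; this is the $\{\pm1\}$-valued 2-cocycle defining the two-fold cover $\overline{GL}_2(\mathbb R)$. *)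

theory Defs
  imports "HOL-Analysis.Analysis"
begin

type_synonym mat2 = "real^2^2"

definition hilbR :: "real \<Rightarrow> real \<Rightarrow> int" where
  "hilbR x y = (if x < 0 \<and> y < 0 then -1 else 1)"

definition xfun :: "mat2 \<Rightarrow> real" where
  "xfun g = (if g$2$1 = 0 then g$2$2 else g$2$1)"

definition cbar :: "mat2 \<Rightarrow> mat2 \<Rightarrow> int" where
  "cbar g1 g2 = hilbR (xfun g1) (xfun g2) * hilbR (- xfun g1 * xfun g2) (xfun (g1 ** g2))"

definition nu2 :: "real \<Rightarrow> mat2 \<Rightarrow> int" where
  "nu2 y g = (if g$2$1 = 0 then hilbR y (g$1$1) else 1)"

definition sdiag :: "real \<Rightarrow> mat2" where
  "sdiag y = (\<chi> i j. if i = j then (if i = 1 then 1 else y) else 0)"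

definition Cbar :: "mat2 \<Rightarrow> mat2 \<Rightarrow> int" where
  "Cbar h1 h2 =
     (let y1 = det h1; y2 = det h2;
          g1 = matrix_inv (sdiag y1) ** h1;
          g2 = matrix_inv (sdiag y2) ** h2
      in nu2 y2 g1 * cbar (matrix_inv (sdiag y2) ** g1 ** sdiag y2) g2)"

definition Gamma_pm2 :: "mat2 set" where
  "Gamma_pm2 = {g. (\<forall>i j. g$i$j \<in> \<int>) \<and> (det g = 1 \<or> det g = -1) \<and>
                   (\<forall>i j. (g$i$j - mat 1 $i$j) / 2 \<in> \<int>)}"

end

theory Submission
  imports Defs
begin

lemma inv_self:
  fixes S :: mat2
  assumes "S ** S = mat 1"
  shows "matrix_inv S = S"
proof -
  have ex: "\<exists>M::mat2. S ** M = mat 1 \<and> M ** S = mat 1" using assms by blast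
  define M where "M = matrix_inv S"
  have M: "S ** M = mat 1 \<and> M ** S = mat 1"
    unfolding M_def matrix_inv_def by (rule someI_ex[OF ex])
  have "M = M ** (S ** S)" using assms by (simp add: matrix_mul_rid)
  also have "\<dots> = (M ** S) ** S" by (simp add: matrix_mul_assoc)
  also have "\<dots> = S" using M by (simp add: matrix_mul_lid)
  finally show ?thesis unfolding M_def .
qed

definition AA :: mat2 where "AA = mat (-1)"
definition BB :: mat2 where "BB = sdiag (-1)"

lemma ent_mat: "(mat k :: mat2) $ i $ j = (if i = j then k else 0)"
  by (simp add: mat_def)

lemma ent_s: "sdiag y $ i $ j = (if i = j then (if i = 1 then 1 else y) else 0)"
  by (simp add: sdiag_def)

lemma mul2: "((X::mat2) ** Y) $ i $ j = X$i$1 * Y$1$j + X$i$2 * Y$2$j"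
  by (simp add: matrix_matrix_mult_def sum_2)

lemma s1: "sdiag 1 = mat 1"
  by (simp add: vec_eq_iff forall_2 ent_s ent_mat)

lemma ss: "sdiag (-1) ** sdiag (-1) = mat 1"
  by (simp add: vec_eq_iff forall_2 ent_s ent_mat mul2)

lemma inv1: "matrix_inv (sdiag 1) = mat 1"
  using inv_self[of "mat 1"] by (simp add: s1 matrix_mul_lid)

lemma invm: "matrix_inv (sdiag (-1)) = sdiag (-1)"
  using inv_self[OF ss] .

lemma detA: "det AA = 1" by (simp add: det_2 AA_def ent_mat)
lemma detB: "det BB = -1" by (simp add: det_2 BB_def ent_s)

lemma comm: "AA ** BB = BB ** AA"
  by (simp add: vec_eq_iff forall_2 ent_s ent_mat mul2 AA_def BB_def)

lemma CAB: "Cbar AA BB = -1"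
proof -
  have g1: "matrix_inv (sdiag 1) ** AA = AA" by (simp add: inv1 matrix_mul_lid)
  have g2: "matrix_inv (sdiag (-1)) ** BB = mat 1" by (simp add: invm BB_def ss)
  have g3: "matrix_inv (sdiag (-1)) ** AA ** sdiag (-1) = AA"
    by (simp add: invm vec_eq_iff forall_2 ent_s ent_mat mul2 AA_def)
  show ?thesis
    unfolding Cbar_def Let_def detA detB g1 g2 g3
    by (simp add: nu2_def cbar_def xfun_def hilbR_def AA_def ent_mat matrix_mul_rid)
qed

lemma CBA: "Cbar BB AA = 1"
proof -
  have g1: "matrix_inv (sdiag 1) ** AA = AA" by (simp add: inv1 matrix_mul_lid)
  have g2: "matrix_inv (sdiag (-1)) ** BB = mat 1" by (simp add: invm BB_def ss)
  show ?thesis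
    unfolding Cbar_def Let_def detA detB g1 g2 inv1
    by (simp add: nu2_def cbar_def xfun_def hilbR_def AA_def ent_mat matrix_mul_rid matrix_mul_lid s1)
qed

lemma ints: "(\<forall>i j. g$i$j \<in> \<int>) \<longleftrightarrow> (g$1$1 \<in> \<int> \<and> g$1$2 \<in> \<int> \<and> g$2$1 \<in> \<int> \<and> g$2$2 \<in> \<int>)"
  for g :: mat2 by (simp add: forall_2)

lemma A_in: "AA \<in> Gamma_pm2"
  unfolding Gamma_pm2_def using detA
  by (simp add: forall_2 AA_def ent_mat)

lemma B_in: "BB \<in> Gamma_pm2"
  unfolding Gamma_pm2_def using detB
  by (simp add: forall_2 BB_def ent_s ent_mat)

theorem mainTheorem14:
  shows "\<not> (\<exists>f :: mat2 \<Rightarrow> complex.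
             (\<forall>h\<in>Gamma_pm2. f h \<noteq> 0) \<and>
             (\<forall>h1\<in>Gamma_pm2. \<forall>h2\<in>Gamma_pm2.
                 of_int (Cbar h1 h2) = f h1 * f h2 / f (h1 ** h2)))"
proof
  assume "\<exists>f :: mat2 \<Rightarrow> complex.
             (\<forall>h\<in>Gamma_pm2. f h \<noteq> 0) \<and>
             (\<forall>h1\<in>Gamma_pm2. \<forall>h2\<in>Gamma_pm2.
                 of_int (Cbar h1 h2) = f h1 * f h2 / f (h1 ** h2))"
  then obtain f :: "mat2 \<Rightarrow> complex" where
    h: "\<forall>h1\<in>Gamma_pm2. \<forall>h2\<in>Gamma_pm2. of_int (Cbar h1 h2) = f h1 * f h2 / f (h1 ** h2)"
    by blast
  have "of_int (Cbar AA BB) = f AA * f BB / f (AA ** BB)" using h A_in B_in by blast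
  moreover have "of_int (Cbar BB AA) = f BB * f AA / f (BB ** AA)" using h A_in B_in by blast
  ultimately have "(of_int (Cbar AA BB) :: complex) = of_int (Cbar BB AA)"
    by (simp add: comm mult.commute)
  then show False by (simp add: CAB CBA)
qed

end
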